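(* Let $k=k(n)$ be integers with $1\le k=O(\log n)$, let $h(n)=o(n/\log^2 n)$ and let $\zeta(n)=o(2^{-k(n)})$. Then there is $n_0$ such that for all $n\ge n_0$ and every $X\subseteq Q=\{0,1\}^n$ with $\mu(X)\ge \exp[-h(n)]$, if $C$ is a uniformly random $k$-clause on $x_1,\dots,x_n$ then $$\Pr\big(\mu(C\wedge X)>(1-\zeta(n))\mu(X)\big)<1/2,$$ where $C\wedge X=\{x\in X: C(x)=1\}$.
   Context: $Q=\{0,1\}^n$ with uniform probability measure $\mu$. A uniformly random $k$-clause on $x_1,\dots,x_n$ is obtained by choosing a $k$-subset $K\subseteq[n]$ uniformly at random and a vector $g\in\{0,1\}^K$ uniformly at random; the clause is the Boolean function $C(x)=1$ iff $x_j=g_j$ for some $j\in K$. *)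

theory Defs
  imports Complex_Main "HOL-Library.FuncSet" "HOL-Library.Landau_Symbols"
begin

text \<open>The cube Q = {0,1}^n, coordinates indexed by 0..n-1 (x_1..x_n in the paper).\<close>
definition cube :: "nat \<Rightarrow> (nat \<Rightarrow> bool) set" where
  "cube n = {..<n} \<rightarrow>\<^sub>E (UNIV :: bool set)"

definition mu :: "nat \<Rightarrow> (nat \<Rightarrow> bool) set \<Rightarrow> real" where
  "mu n X = real (card (X \<inter> cube n)) / 2 ^ n"

text \<open>A k-clause is a pair (K,g): K a k-subset of the coordinates, g a 0/1 vector on K.
  A uniformly random k-clause = uniform K, then uniform g, i.e. uniform over these pairs.\<close>
definition clauses :: "nat \<Rightarrow> nat \<Rightarrow> (nat set \<times> (nat \<Rightarrow> bool)) set" where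
  "clauses n k = {(K, g). K \<subseteq> {..<n} \<and> card K = k \<and> g \<in> K \<rightarrow>\<^sub>E (UNIV :: bool set)}"

definition clause_val :: "nat set \<times> (nat \<Rightarrow> bool) \<Rightarrow> (nat \<Rightarrow> bool) \<Rightarrow> bool" where
  "clause_val C x = (\<exists>j\<in>fst C. x j = snd C j)"

definition clause_and :: "nat set \<times> (nat \<Rightarrow> bool) \<Rightarrow> (nat \<Rightarrow> bool) set \<Rightarrow> (nat \<Rightarrow> bool) set" where
  "clause_and C X = {x \<in> X. clause_val C x}"

definition clause_prob :: "nat \<Rightarrow> nat \<Rightarrow> (nat set \<times> (nat \<Rightarrow> bool) \<Rightarrow> bool) \<Rightarrow> real" where
  "clause_prob n k P = real (card {C \<in> clauses n k. P C}) / real (card (clauses n k))"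

end

theory Submission
  imports Defs "HOL-Real_Asymp.Real_Asymp"
begin


definition agr :: "nat set \<Rightarrow> (nat\<Rightarrow>bool) \<Rightarrow> (nat\<Rightarrow>bool) \<Rightarrow> bool" where
  "agr A x y \<longleftrightarrow> (\<forall>j\<in>A. x j = y j)"

definition cnt :: "(nat\<Rightarrow>bool) set \<Rightarrow> nat set \<Rightarrow> (nat\<Rightarrow>bool) \<Rightarrow> nat" where
  "cnt X A x = card {y\<in>X. agr A y x}"

definition ent :: "(nat\<Rightarrow>bool) set \<Rightarrow> nat set \<Rightarrow> real" where
  "ent X A = (\<Sum>x\<in>X. ln (2 ^ card A * real (cnt X A x) / real (card X))) / real (card X)"

lemma agr_restrict: "agr A y x \<longleftrightarrow> restrict y A = restrict x A"
  unfolding agr_def restrict_def by (auto simp: fun_eq_iff)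

lemma cnt_pos:
  assumes "finite X" "x \<in> X" shows "cnt X A x \<ge> 1"
proof -
  have "x \<in> {y\<in>X. agr A y x}" using assms(2) by (simp add: agr_def)
  then have "{y\<in>X. agr A y x} \<noteq> {}" by blast
  moreover have "finite {y\<in>X. agr A y x}" using assms(1) by simp
  ultimately have "card {y\<in>X. agr A y x} > 0" by (simp only: card_gt_0_iff) simp
  then show ?thesis unfolding cnt_def by simp
qed

lemma fiber_sum:
  assumes "finite S"
  shows "(\<Sum>x\<in>S. 1 / real (card {y\<in>S. r y = r x})) = real (card (r ` S))"
proof -
  have "(\<Sum>x\<in>S. 1 / real (card {y\<in>S. r y = r x})) =
        (\<Sum>p\<in>r ` S. \<Sum>x\<in>{x\<in>S. r x = p}. 1 / real (card {y\<in>S. r y = r x}))"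
    by (rule sum.image_gen[OF assms])
  also have "\<dots> = (\<Sum>p\<in>r ` S. 1)"
  proof (rule sum.cong[OF refl])
    fix p assume p: "p \<in> r ` S"
    have "(\<Sum>x\<in>{x\<in>S. r x = p}. 1 / real (card {y\<in>S. r y = r x}))
        = (\<Sum>x\<in>{x\<in>S. r x = p}. 1 / real (card {y\<in>S. r y = p}))"
      by (rule sum.cong) auto
    also have "\<dots> = 1"
      using p assms by auto
    finally show "(\<Sum>x\<in>{x\<in>S. r x = p}. 1 / real (card {y\<in>S. r y = r x})) = 1" .
  qed
  finally show ?thesis by simp
qed

lemma class_sum:
  assumes X: "finite X" and P: "finite P"
  shows "(\<Sum>x\<in>{x\<in>X. restrict x A \<in> P}. 1 / real (cnt X A x)) \<le> real (card P)"
proof -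
  let ?S = "{x\<in>X. restrict x A \<in> P}"
  have "(\<Sum>x\<in>?S. 1 / real (cnt X A x)) = (\<Sum>x\<in>?S. 1 / real (card {y\<in>?S. restrict y A = restrict x A}))"
  proof (rule sum.cong[OF refl])
    fix x assume "x \<in> ?S"
    then have "{y\<in>X. agr A y x} = {y\<in>?S. restrict y A = restrict x A}"
      by (auto simp: agr_restrict)
    then show "1 / real (cnt X A x) = 1 / real (card {y\<in>?S. restrict y A = restrict x A})"
      by (simp add: cnt_def)
  qed
  also have "\<dots> = real (card ((\<lambda>y. restrict y A) ` ?S))"
    by (rule fiber_sum) (use X in auto)
  also have "\<dots> \<le> real (card P)"
    by (intro of_nat_mono card_mono P) auto
  finally show ?thesis .
qed

lemma ln_ge_aux:
  fixes t l :: real assumes "t > 0" "l > 0"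
  shows "ln t \<ge> ln l + 1 - l / t"
proof -
  have "ln (l / t) \<le> l / t - 1" using assms by (intro ln_le_minus_one) auto
  moreover have "ln (l / t) = ln l - ln t" using assms by (simp add: ln_div)
  ultimately show ?thesis by simp
qed

lemma ln_sum_bound:
  assumes X: "finite X" and P: "finite P" and l: "l > 0" and N: "card X > 0"
  shows "(\<Sum>x\<in>{x\<in>X. restrict x A \<in> P}. ln (2 ^ card A * real (cnt X A x) / real (card X)))
     \<ge> real (card {x\<in>X. restrict x A \<in> P}) * (ln l + 1) - l * real (card X) / 2 ^ card A * real (card P)"
proof -
  let ?S = "{x\<in>X. restrict x A \<in> P}"
  let ?N = "real (card X)"
  have "(\<Sum>x\<in>?S. ln l + 1 - l * ?N / 2 ^ card A * (1 / real (cnt X A x)))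
      \<le> (\<Sum>x\<in>?S. ln (2 ^ card A * real (cnt X A x) / ?N))"
  proof (rule sum_mono)
    fix x assume x: "x \<in> ?S"
    have c: "real (cnt X A x) \<ge> 1" using cnt_pos[OF X] x by simp
    have t: "2 ^ card A * real (cnt X A x) / ?N > 0" using c N by simp
    have "ln (2 ^ card A * real (cnt X A x) / ?N) \<ge> ln l + 1 - l / (2 ^ card A * real (cnt X A x) / ?N)"
      by (rule ln_ge_aux[OF t l])
    moreover have "l / (2 ^ card A * real (cnt X A x) / ?N) = l * ?N / 2 ^ card A * (1 / real (cnt X A x))"
      using c N by (simp add: field_simps)
    ultimately show "ln l + 1 - l * ?N / 2 ^ card A * (1 / real (cnt X A x)) \<le> ln (2 ^ card A * real (cnt X A x) / ?N)"
      by simp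
  qed
  moreover have "(\<Sum>x\<in>?S. ln l + 1 - l * ?N / 2 ^ card A * (1 / real (cnt X A x)))
     = (\<Sum>x\<in>?S. ln l + 1) - (\<Sum>x\<in>?S. l * ?N / 2 ^ card A * (1 / real (cnt X A x)))"
    by (rule sum_subtractf)
  moreover have "(\<Sum>x\<in>?S. l * ?N / 2 ^ card A * (1 / real (cnt X A x))) = l * ?N / 2 ^ card A * (\<Sum>x\<in>?S. 1 / real (cnt X A x))"
    by (rule sum_distrib_left[symmetric])
  moreover have "(\<Sum>x\<in>?S. ln l + 1) = real (card ?S) * (ln l + 1)" by simp
  moreover have "l * ?N / 2 ^ card A * (\<Sum>x\<in>?S. 1 / real (cnt X A x)) \<le> l * ?N / 2 ^ card A * real (card P)"
    by (intro mult_left_mono class_sum X P) (use l in simp)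
  ultimately show ?thesis by linarith
qed

lemma card_patterns: "finite A \<Longrightarrow> card (A \<rightarrow>\<^sub>E (UNIV::bool set)) = 2 ^ card A"
  by (simp add: card_PiE)

lemma ent_nonneg:
  assumes X: "finite X" "X \<noteq> {}" and A: "finite A"
  shows "ent X A \<ge> 0"
proof -
  have N: "card X > 0" using X by auto
  have S: "{x\<in>X. restrict x A \<in> A \<rightarrow>\<^sub>E (UNIV::bool set)} = X" by auto
  have fP: "finite (A \<rightarrow>\<^sub>E (UNIV::bool set))" using A by (rule finite_PiE) simp
  have "(\<Sum>x\<in>{x\<in>X. restrict x A \<in> A \<rightarrow>\<^sub>E (UNIV::bool set)}. ln (2 ^ card A * real (cnt X A x) / real (card X))) \<ge> real (card {x\<in>X. restrict x A \<in> A \<rightarrow>\<^sub>E (UNIV::bool set)}) * (ln 1 + 1) - 1 * real (card X) / 2 ^ card A * real (card (A \<rightarrow>\<^sub>E (UNIV::bool set)))"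
    by (rule ln_sum_bound[OF X(1) fP _ N]) simp
  then have "(\<Sum>x\<in>X. ln (2 ^ card A * real (cnt X A x) / real (card X))) \<ge> real (card X) * (ln 1 + 1) - 1 * real (card X) / 2 ^ card A * real (2 ^ card A)"
    unfolding S card_patterns[OF A] .
  then have "(\<Sum>x\<in>X. ln (2 ^ card A * real (cnt X A x) / real (card X))) \<ge> 0" by simp
  then show ?thesis unfolding ent_def by simp
qed



lemma pair_sum:
  assumes X: "finite X"
  shows "(\<Sum>x\<in>X. real (cnt X A x) * real (cnt X B x) / real (cnt X (A \<union> B) x)) \<le> real (card X) ^ 2"
proof -
  define R where "R = (\<lambda>x (p::(nat\<Rightarrow>bool)\<times>(nat\<Rightarrow>bool)). agr A (fst p) x \<and> agr B (snd p) x)"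
  have fXX: "finite (X \<times> X)" using X by simp
  have 1: "real (cnt X A x) * real (cnt X B x) = real (card {p\<in>X \<times> X. R x p})" for x
  proof -
    have e: "{p\<in>X \<times> X. R x p} = {y\<in>X. agr A y x} \<times> {z\<in>X. agr B z x}"
      unfolding R_def by auto
    have "card {p\<in>X \<times> X. R x p} = card {y\<in>X. agr A y x} * card {z\<in>X. agr B z x}"
      unfolding e by (rule card_cartesian_product)
    then show ?thesis unfolding cnt_def by simp
  qed
  have "(\<Sum>x\<in>X. real (cnt X A x) * real (cnt X B x) / real (cnt X (A \<union> B) x))
      = (\<Sum>x\<in>X. \<Sum>p\<in>{p\<in>X \<times> X. R x p}. 1 / real (cnt X (A \<union> B) x))"
    by (rule sum.cong[OF refl]) (simp add: 1)
  also have "\<dots> = (\<Sum>p\<in>X \<times> X. \<Sum>x\<in>{x\<in>X. R x p}. 1 / real (cnt X (A \<union> B) x))"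
    by (rule sum.swap_restrict[OF X fXX])
  also have "\<dots> \<le> (\<Sum>p\<in>X \<times> X. 1)"
  proof (rule sum_mono)
    fix p assume "p \<in> X \<times> X"
    let ?S = "{x\<in>X. R x p}"
    have eq: "cnt X (A \<union> B) x = card ?S" if "x \<in> ?S" for x
    proof -
      have "{w\<in>X. agr (A \<union> B) w x} = ?S" using that unfolding R_def agr_def by auto
      then show ?thesis unfolding cnt_def by simp
    qed
    have "(\<Sum>x\<in>?S. 1 / real (cnt X (A \<union> B) x)) = (\<Sum>x\<in>?S. 1 / real (card ?S))"
      by (rule sum.cong[OF refl]) (simp add: eq)
    also have "\<dots> \<le> 1"
      by (cases "?S = {}") (use X in auto)
    finally show "(\<Sum>x\<in>?S. 1 / real (cnt X (A \<union> B) x)) \<le> 1" .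
  qed
  also have "\<dots> = real (card X) ^ 2"
    by (simp add: card_cartesian_product power2_eq_square)
  finally show ?thesis .
qed

lemma ent_mult: "card X > 0 \<Longrightarrow> real (card X) * ent X A = (\<Sum>x\<in>X. ln (2 ^ card A * real (cnt X A x) / real (card X)))"
  unfolding ent_def by simp

lemma ent_superadd:
  assumes X: "finite X" "X \<noteq> {}" and A: "finite A" and B: "finite B" and AB: "A \<inter> B = {}"
  shows "ent X A + ent X B \<le> ent X (A \<union> B)"
proof -
  let ?N = "real (card X)"
  have N: "?N > 0" using X by auto
  have "card X > 0" using X by auto
  have cAB: "card (A \<union> B) = card A + card B" using A B AB by (simp add: card_Un_disjoint)
  have pt: "ln (2 ^ card (A \<union> B) * real (cnt X (A \<union> B) x) / ?N)
           - ln (2 ^ card A * real (cnt X A x) / ?N) - ln (2 ^ card B * real (cnt X B x) / ?N)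
           \<ge> 1 - real (cnt X A x) * real (cnt X B x) / real (cnt X (A \<union> B) x) / ?N"
    if x: "x \<in> X" for x
  proof -
    define a where "a = real (cnt X A x)"
    define b where "b = real (cnt X B x)"
    define c where "c = real (cnt X (A \<union> B) x)"
    have a: "a > 0" unfolding a_def using cnt_pos[OF X(1) x, of A] by simp
    have b: "b > 0" unfolding b_def using cnt_pos[OF X(1) x, of B] by simp
    have c: "c > 0" unfolding c_def using cnt_pos[OF X(1) x, of "A \<union> B"] by simp
    have u: "(2::real) ^ card (A \<union> B) = 2 ^ card A * 2 ^ card B" by (simp add: cAB power_add)
    have "ln (2 ^ card (A \<union> B) * c / ?N) - ln (2 ^ card A * a / ?N) - ln (2 ^ card B * b / ?N)
        = ln (?N * c / (a * b))"
      using a b c N by (simp add: u ln_div ln_mult)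
    also have "\<dots> \<ge> ln 1 + 1 - 1 / (?N * c / (a * b))"
      by (rule ln_ge_aux) (use a b c N in auto)
    finally have "ln (2 ^ card (A \<union> B) * c / ?N) - ln (2 ^ card A * a / ?N) - ln (2 ^ card B * b / ?N)
        \<ge> 1 - a * b / c / ?N" by (simp add: mult.commute)
    then show ?thesis unfolding a_def b_def c_def .
  qed
  have "(\<Sum>x\<in>X. 1 - real (cnt X A x) * real (cnt X B x) / real (cnt X (A \<union> B) x) / ?N)
      \<le> (\<Sum>x\<in>X. ln (2 ^ card (A \<union> B) * real (cnt X (A \<union> B) x) / ?N)
           - ln (2 ^ card A * real (cnt X A x) / ?N) - ln (2 ^ card B * real (cnt X B x) / ?N))"
    by (rule sum_mono) (rule pt)
  also have "\<dots> = (\<Sum>x\<in>X. ln (2 ^ card (A \<union> B) * real (cnt X (A \<union> B) x) / ?N))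
           - (\<Sum>x\<in>X. ln (2 ^ card A * real (cnt X A x) / ?N)) - (\<Sum>x\<in>X. ln (2 ^ card B * real (cnt X B x) / ?N))"
    by (simp only: sum_subtractf)
  finally have 1: "(\<Sum>x\<in>X. 1 - real (cnt X A x) * real (cnt X B x) / real (cnt X (A \<union> B) x) / ?N)
     \<le> ?N * ent X (A \<union> B) - ?N * ent X A - ?N * ent X B"
    unfolding ent_mult[OF \<open>card X > 0\<close>] .
  have "(\<Sum>x\<in>X. 1 - real (cnt X A x) * real (cnt X B x) / real (cnt X (A \<union> B) x) / ?N)
      = ?N - (\<Sum>x\<in>X. real (cnt X A x) * real (cnt X B x) / real (cnt X (A \<union> B) x)) / ?N"
    by (simp add: sum_subtractf sum_divide_distrib)
  also have "\<dots> \<ge> ?N - ?N ^ 2 / ?N"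
    using pair_sum[OF X(1), of A B] N by (simp add: divide_right_mono)
  finally have "0 \<le> ?N * ent X (A \<union> B) - ?N * ent X A - ?N * ent X B"
    using 1 N by (simp add: power2_eq_square)
  then have "0 \<le> ?N * (ent X (A \<union> B) - ent X A - ent X B)" by (simp add: algebra_simps)
  then show ?thesis using N by (simp add: zero_le_mult_iff)
qed



definition subs :: "nat set \<Rightarrow> nat \<Rightarrow> nat set set" where
  "subs U j = {A. A \<subseteq> U \<and> card A = j}"

lemma finite_subs: "finite U \<Longrightarrow> finite (subs U j)"
  unfolding subs_def by (rule finite_subset[of _ "Pow U"]) auto

lemma card_subs: "finite U \<Longrightarrow> card (subs U j) = card U choose j"
  unfolding subs_def by (rule n_subsets)

lemma card_supersets:
  assumes U: "finite U" and K: "K \<in> subs U j" and ja: "j \<le> a"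
  shows "card {A\<in>subs U a. K \<subseteq> A} = (card U - j) choose (a - j)"
proof -
  have KU: "K \<subseteq> U" and cK: "card K = j" using K unfolding subs_def by auto
  have fK: "finite K" using KU U finite_subset by blast
  have "bij_betw (\<lambda>A. A - K) {A\<in>subs U a. K \<subseteq> A} {B. B \<subseteq> U - K \<and> card B = a - j}"
  proof (rule bij_betw_byWitness[where f'="\<lambda>B. B \<union> K"])
    show "\<forall>A\<in>{A\<in>subs U a. K \<subseteq> A}. A - K \<union> K = A" by auto
    show "\<forall>B\<in>{B. B \<subseteq> U - K \<and> card B = a - j}. B \<union> K - K = B" by auto
    show "(\<lambda>A. A - K) ` {A\<in>subs U a. K \<subseteq> A} \<subseteq> {B. B \<subseteq> U - K \<and> card B = a - j}"
    proof
      fix B assume "B \<in> (\<lambda>A. A - K) ` {A\<in>subs U a. K \<subseteq> A}"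
      then obtain A where A: "A \<subseteq> U" "card A = a" "K \<subseteq> A" and B: "B = A - K"
        unfolding subs_def by auto
      have "card (A - K) = a - j" using A cK fK by (simp add: card_Diff_subset)
      then show "B \<in> {B. B \<subseteq> U - K \<and> card B = a - j}" using A B by auto
    qed
    show "(\<lambda>B. B \<union> K) ` {B. B \<subseteq> U - K \<and> card B = a - j} \<subseteq> {A\<in>subs U a. K \<subseteq> A}"
    proof
      fix A assume "A \<in> (\<lambda>B. B \<union> K) ` {B. B \<subseteq> U - K \<and> card B = a - j}"
      then obtain B where B: "B \<subseteq> U - K" "card B = a - j" and A: "A = B \<union> K" by auto
      have fB: "finite B" using B U finite_subset by blast
      have "card (B \<union> K) = card B + card K"
        by (rule card_Un_disjoint) (use fB fK B in auto)
      then have "card A = a" using A B cK ja by simp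
      then show "A \<in> {A\<in>subs U a. K \<subseteq> A}" using A B KU unfolding subs_def by auto
    qed
  qed
  then have "card {A\<in>subs U a. K \<subseteq> A} = card {B. B \<subseteq> U - K \<and> card B = a - j}"
    by (rule bij_betw_same_card)
  also have "\<dots> = card (U - K) choose (a - j)" by (rule n_subsets) (use U in simp)
  also have "card (U - K) = card U - j" using KU fK cK by (simp add: card_Diff_subset)
  finally show ?thesis .
qed

lemma double_count:
  fixes G :: "nat set \<Rightarrow> real"
  assumes U: "finite U" and ja: "j \<le> a"
  shows "(\<Sum>A\<in>subs U a. \<Sum>K\<in>{K. K \<subseteq> A \<and> card K = j}. G K)
       = real ((card U - j) choose (a - j)) * (\<Sum>K\<in>subs U j. G K)"
proof -
  have "(\<Sum>A\<in>subs U a. \<Sum>K\<in>{K. K \<subseteq> A \<and> card K = j}. G K)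
      = (\<Sum>A\<in>subs U a. \<Sum>K\<in>{K. K \<in> subs U j \<and> K \<subseteq> A}. G K)"
    by (rule sum.cong[OF refl], rule sum.cong) (auto simp: subs_def)
  also have "\<dots> = (\<Sum>K\<in>subs U j. \<Sum>A\<in>{A. A \<in> subs U a \<and> K \<subseteq> A}. G K)"
    by (rule sum.swap_restrict) (use U finite_subs in auto)
  also have "\<dots> = (\<Sum>K\<in>subs U j. real ((card U - j) choose (a - j)) * G K)"
    by (rule sum.cong[OF refl]) (simp add: card_supersets[OF U _ ja])
  also have "\<dots> = real ((card U - j) choose (a - j)) * (\<Sum>K\<in>subs U j. G K)"
    by (simp add: sum_distrib_left)
  finally show ?thesis .
qed

lemma complement_reindex:
  fixes G :: "nat set \<Rightarrow> real"
  assumes U: "finite U" and ka: "k \<le> a"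
  shows "(\<Sum>A\<in>subs U a. \<Sum>K\<in>{K. K \<subseteq> A \<and> card K = k}. G (A - K))
       = (\<Sum>A\<in>subs U a. \<Sum>J\<in>{J. J \<subseteq> A \<and> card J = a - k}. G J)"
proof (rule sum.cong[OF refl])
  fix A assume A: "A \<in> subs U a"
  then have fA: "finite A" and cA: "card A = a" using U finite_subset unfolding subs_def by auto
  show "(\<Sum>K\<in>{K. K \<subseteq> A \<and> card K = k}. G (A - K)) = (\<Sum>J\<in>{J. J \<subseteq> A \<and> card J = a - k}. G J)"
  proof (rule sum.reindex_bij_witness[where i="\<lambda>J. A - J" and j="\<lambda>K. A - K"])
    fix K assume K: "K \<in> {K. K \<subseteq> A \<and> card K = k}"
    then show "A - (A - K) = K" by auto
    have KA: "K \<subseteq> A" and cK: "card K = k" using K by auto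
    have fK: "finite K" using KA fA finite_subset by blast
    have "card (A - K) = a - k" using KA fK cA cK by (simp add: card_Diff_subset)
    then show "A - K \<in> {J. J \<subseteq> A \<and> card J = a - k}" by auto
  next
    fix J assume J: "J \<in> {J. J \<subseteq> A \<and> card J = a - k}"
    then show "A - (A - J) = J" by auto
    have JA: "J \<subseteq> A" and cJ: "card J = a - k" using J by auto
    have fJ: "finite J" using JA fA finite_subset by blast
    have "card (A - J) = a - (a - k)" using JA fJ cA cJ by (simp add: card_Diff_subset)
    then show "A - J \<in> {K. K \<subseteq> A \<and> card K = k}" using ka by auto
  qed simp
qed

definition Tav :: "nat set \<Rightarrow> (nat set \<Rightarrow> real) \<Rightarrow> nat \<Rightarrow> real" where
  "Tav U F j = (\<Sum>A\<in>subs U j. F A) / real (card U choose j)"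

lemma Tav_step:
  fixes F :: "nat set \<Rightarrow> real"
  assumes U: "finite U" and ka: "k \<le> a" and an: "a \<le> card U"
    and sup: "\<And>A B. A \<subseteq> U \<Longrightarrow> B \<subseteq> U \<Longrightarrow> A \<inter> B = {} \<Longrightarrow> F A + F B \<le> F (A \<union> B)"
  shows "Tav U F k + Tav U F (a - k) \<le> Tav U F a"
proof -
  let ?n = "card U"
  let ?S = "\<lambda>j. (\<Sum>A\<in>subs U j. F A)"
  have inner: "(\<Sum>K\<in>{K. K \<subseteq> A \<and> card K = k}. F A) = real (a choose k) * F A" if "A \<in> subs U a" for A
  proof -
    have fA: "finite A" and cA: "card A = a" using that U finite_subset unfolding subs_def by auto
    have "card {K. K \<subseteq> A \<and> card K = k} = a choose k" using n_subsets[OF fA] cA by simp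
    then show ?thesis by simp
  qed
  have "(\<Sum>A\<in>subs U a. \<Sum>K\<in>{K. K \<subseteq> A \<and> card K = k}. F K + F (A - K))
      \<le> (\<Sum>A\<in>subs U a. \<Sum>K\<in>{K. K \<subseteq> A \<and> card K = k}. F A)"
  proof (rule sum_mono, rule sum_mono)
    fix A K assume A: "A \<in> subs U a" and K: "K \<in> {K. K \<subseteq> A \<and> card K = k}"
    have "F K + F (A - K) \<le> F (K \<union> (A - K))" by (rule sup) (use A K in \<open>auto simp: subs_def\<close>)
    also have "K \<union> (A - K) = A" using K by auto
    finally show "F K + F (A - K) \<le> F A" .
  qed
  also have "\<dots> = (\<Sum>A\<in>subs U a. real (a choose k) * F A)"
    by (rule sum.cong[OF refl]) (rule inner)
  also have "\<dots> = real (a choose k) * ?S a"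
    by (simp only: sum_distrib_left)
  finally have 1: "real ((?n - k) choose (a - k)) * ?S k + real ((?n - (a - k)) choose k) * ?S (a - k)
      \<le> real (a choose k) * ?S a"
    using double_count[OF U ka, of F] double_count[OF U, of "a - k" a F] complement_reindex[OF U ka, of F]
    by (simp add: sum.distrib ka)
  have c1: "real (?n choose a) * real (a choose k) = real (?n choose k) * real ((?n - k) choose (a - k))"
    using choose_mult[OF ka an] by (metis of_nat_mult)
  have c2: "real (?n choose a) * real (a choose k) = real (?n choose (a - k)) * real ((?n - (a - k)) choose k)"
  proof -
    have "(?n choose a) * (a choose (a - k)) = (?n choose (a - k)) * ((?n - (a - k)) choose (a - (a - k)))"
      by (rule choose_mult) (use ka an in auto)
    moreover have "a choose (a - k) = a choose k" using ka by (simp add: binomial_symmetric[symmetric])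
    moreover have "a - (a - k) = k" using ka by simp
    ultimately show ?thesis by (metis of_nat_mult)
  qed
  have p1: "real (?n choose a) > 0" using an by simp
  have p2: "real (a choose k) > 0" using ka by simp
  have p3: "real (?n choose k) > 0" using ka an by simp
  have p4: "real (?n choose (a - k)) > 0" using an by simp
  define D where "D = real (?n choose a) * real (a choose k)"
  have D: "D > 0" unfolding D_def using p1 p2 by simp
  have "Tav U F k + Tav U F (a - k) = (real ((?n - k) choose (a - k)) * ?S k + real ((?n - (a - k)) choose k) * ?S (a - k)) / D"
    unfolding Tav_def D_def using c1 c2 p1 p2 p3 p4 by (simp add: field_simps)
  also have "\<dots> \<le> real (a choose k) * ?S a / D"
    using 1 D by (simp add: divide_right_mono)
  also have "\<dots> = Tav U F a"
    unfolding Tav_def D_def using p1 p2 by (simp add: field_simps)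
  finally show ?thesis .
qed

lemma Tav_nonneg:
  assumes "\<And>A. A \<subseteq> U \<Longrightarrow> F A \<ge> 0"
  shows "Tav U F j \<ge> 0"
  unfolding Tav_def using assms by (intro divide_nonneg_nonneg sum_nonneg) (auto simp: subs_def)

lemma Tav_full:
  assumes U: "finite U"
  shows "Tav U F (card U) = F U"
proof -
  have "subs U (card U) = {U}"
    unfolding subs_def using U card_subset_eq by blast
  then show ?thesis unfolding Tav_def by simp
qed

lemma Tav_mult:
  assumes U: "finite U"
    and sup: "\<And>A B. A \<subseteq> U \<Longrightarrow> B \<subseteq> U \<Longrightarrow> A \<inter> B = {} \<Longrightarrow> F A + F B \<le> F (A \<union> B)"
    and nn: "\<And>A. A \<subseteq> U \<Longrightarrow> F A \<ge> 0"
  shows "j * k \<le> card U \<Longrightarrow> real j * Tav U F k \<le> Tav U F (j * k)"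
proof (induction j)
  case 0
  then show ?case using Tav_nonneg[OF nn] by simp
next
  case (Suc j)
  have le: "j * k \<le> card U" using Suc.prems by simp
  have "Tav U F k + Tav U F (Suc j * k - k) \<le> Tav U F (Suc j * k)"
    by (rule Tav_step[OF U _ Suc.prems sup]) auto
  moreover have "Suc j * k - k = j * k" by simp
  ultimately show ?case using Suc.IH[OF le] by (simp add: algebra_simps)
qed

lemma Tav_bound:
  assumes U: "finite U"
    and sup: "\<And>A B. A \<subseteq> U \<Longrightarrow> B \<subseteq> U \<Longrightarrow> A \<inter> B = {} \<Longrightarrow> F A + F B \<le> F (A \<union> B)"
    and nn: "\<And>A. A \<subseteq> U \<Longrightarrow> F A \<ge> 0"
  shows "real (card U div k) * Tav U F k \<le> F U"
proof -
  let ?m = "card U div k"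
  have mk: "?m * k \<le> card U" by (metis div_times_less_eq_dividend mult.commute)
  have "real ?m * Tav U F k \<le> Tav U F (?m * k)" by (rule Tav_mult[OF U sup nn mk])
  also have "\<dots> \<le> Tav U F (?m * k) + Tav U F (card U - ?m * k)"
    using Tav_nonneg[OF nn] by simp
  also have "\<dots> \<le> Tav U F (card U)"
    by (rule Tav_step[OF U mk le_refl sup])
  also have "\<dots> = F U" by (rule Tav_full[OF U])
  finally show ?thesis .
qed



definition pcount :: "(nat\<Rightarrow>bool) set \<Rightarrow> nat set \<Rightarrow> (nat\<Rightarrow>bool) \<Rightarrow> nat" where
  "pcount X K p = card {x\<in>X. restrict x K = p}"

definition bad :: "(nat\<Rightarrow>bool) set \<Rightarrow> nat set \<Rightarrow> real \<Rightarrow> (nat\<Rightarrow>bool) set" where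
  "bad X K z = {p \<in> K \<rightarrow>\<^sub>E (UNIV::bool set). real (pcount X K p) < z * real (card X)}"

lemma bad_bound:
  assumes X: "finite X" "X \<noteq> {}" and K: "finite K" and eta: "0 < \<eta>" "\<eta> \<le> 1"
    and z: "2 ^ card K * z \<le> \<eta>"
  shows "real (card (bad X K z)) / 2 ^ card K * (1 - \<eta>) \<le> ent X K - \<eta> * ln \<eta>"
proof -
  let ?N = "real (card X)"
  let ?k = "card K"
  define Bd where "Bd = bad X K z"
  define G where "G = (K \<rightarrow>\<^sub>E (UNIV::bool set)) - Bd"
  define SB where "SB = {x\<in>X. restrict x K \<in> Bd}"
  define SG where "SG = {x\<in>X. restrict x K \<in> G}"
  define b where "b = real (card Bd) / 2 ^ ?k"
  define f where "f = (\<lambda>x. ln (2 ^ ?k * real (cnt X K x) / ?N))"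
  have N: "?N > 0" "card X > 0" using X by auto
  have fPi: "finite (K \<rightarrow>\<^sub>E (UNIV::bool set))" using K by (rule finite_PiE) simp
  have BdPi: "Bd \<subseteq> K \<rightarrow>\<^sub>E (UNIV::bool set)" unfolding Bd_def bad_def by auto
  have fBd: "finite Bd" using fPi BdPi finite_subset by blast
  have fG: "finite G" unfolding G_def using fPi by simp
  have cPi: "card (K \<rightarrow>\<^sub>E (UNIV::bool set)) = 2 ^ ?k" by (rule card_patterns[OF K])
  have cG: "real (card G) = 2 ^ ?k - real (card Bd)"
  proof -
    have "card G = 2 ^ ?k - card Bd" unfolding G_def using BdPi fBd cPi by (simp add: card_Diff_subset)
    moreover have "card Bd \<le> 2 ^ ?k" using card_mono[OF fPi BdPi] cPi by simp
    ultimately show ?thesis by (simp add: of_nat_diff)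
  qed
  have XU: "X = SB \<union> SG" and disj: "SB \<inter> SG = {}"
    unfolding SB_def SG_def G_def by auto
  have fSB: "finite SB" and fSG: "finite SG" unfolding SB_def SG_def using X by auto
  have cX: "?N = real (card SB) + real (card SG)"
    using card_Un_disjoint[OF fSB fSG disj] XU by simp
  have sumX: "(\<Sum>x\<in>X. f x) = (\<Sum>x\<in>SB. f x) + (\<Sum>x\<in>SG. f x)"
    using sum.union_disjoint[OF fSB fSG disj] XU by simp
  have hB: "(\<Sum>x\<in>SB. f x) \<ge> real (card SB) * (ln \<eta> + 1) - \<eta> * ?N / 2 ^ ?k * real (card Bd)"
    unfolding SB_def f_def by (rule ln_sum_bound[OF X(1) fBd eta(1) N(2)])
  have hG: "(\<Sum>x\<in>SG. f x) \<ge> real (card SG) * (ln 1 + 1) - 1 * ?N / 2 ^ ?k * real (card G)"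
    unfolding SG_def f_def by (rule ln_sum_bound[OF X(1) fG _ N(2)]) simp
  have cSB: "real (card SB) \<le> \<eta> * ?N"
  proof (cases "Bd = {}")
    case True
    then have "SB = {}" unfolding SB_def by simp
    then show ?thesis using eta N by simp
  next
    case False
    then obtain p where p: "p \<in> Bd" by blast
    then have "z * ?N > 0" unfolding Bd_def bad_def by (auto intro: le_less_trans[rotated])
    then have zpos: "z > 0" using N by (simp add: zero_less_mult_iff)
    have "SB = (\<Union>p\<in>Bd. {x\<in>X. restrict x K = p})" unfolding SB_def by auto
    then have "card SB = (\<Sum>p\<in>Bd. card {x\<in>X. restrict x K = p})"
      by (simp only:) (rule card_UN_disjoint[OF fBd], use X(1) in auto)
    then have "real (card SB) = (\<Sum>p\<in>Bd. real (pcount X K p))" unfolding pcount_def by simp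
    also have "\<dots> \<le> (\<Sum>p\<in>Bd. z * ?N)"
      by (rule sum_mono) (auto simp: Bd_def bad_def less_imp_le)
    also have "\<dots> = real (card Bd) * z * ?N" by simp
    also have "\<dots> \<le> 2 ^ ?k * z * ?N"
      using card_mono[OF fPi BdPi] cPi zpos N
      by (intro mult_right_mono) (auto simp: of_nat_le_iff[symmetric])
    also have "\<dots> \<le> \<eta> * ?N" using z N by (intro mult_right_mono) auto
    finally show ?thesis .
  qed
  have lneta: "ln \<eta> \<le> 0" using eta by simp
  have e1: "\<eta> * ?N / 2 ^ ?k * real (card Bd) = \<eta> * ?N * b" unfolding b_def by simp
  have e2: "1 * ?N / 2 ^ ?k * real (card G) = ?N - ?N * b" unfolding b_def cG by (simp add: field_simps)
  have e3: "real (card SB) * ln \<eta> \<ge> \<eta> * ?N * ln \<eta>"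
    using cSB lneta by (rule mult_right_mono_neg)
  have "?N * ent X K = (\<Sum>x\<in>X. f x)" unfolding f_def by (rule ent_mult[OF N(2)])
  also have "\<dots> \<ge> \<eta> * ?N * ln \<eta> + ?N * b - \<eta> * ?N * b"
    using sumX hB hG e1 e2 e3 cX by (simp add: algebra_simps)
  finally have "?N * (\<eta> * ln \<eta> + b * (1 - \<eta>)) \<le> ?N * ent X K" by (simp add: algebra_simps)
  then have "\<eta> * ln \<eta> + b * (1 - \<eta>) \<le> ent X K" using N by simp
  then show ?thesis unfolding b_def Bd_def by simp
qed



lemma finite_cube: "finite (cube n)"
  unfolding cube_def by (rule finite_PiE) auto

lemma fin_sub: assumes "A \<subseteq> {..<(n::nat)}" shows "finite A"
  using finite_subset[OF assms finite_lessThan] .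

lemma mu_sub: "X \<subseteq> cube n \<Longrightarrow> mu n X = real (card X) / 2 ^ n"
  unfolding mu_def by (simp add: Int_absorb2)

lemma ent_full:
  assumes X: "X \<subseteq> cube n" "X \<noteq> {}"
  shows "ent X {..<n} = ln (2 ^ n / real (card X))"
proof -
  have fX: "finite X" using finite_subset[OF X(1) finite_cube] .
  have c1: "cnt X {..<n} x = 1" if x: "x \<in> X" for x
  proof -
    have "{y\<in>X. agr {..<n} y x} = {x}"
    proof
      show "{x} \<subseteq> {y\<in>X. agr {..<n} y x}" using x by (auto simp: agr_def)
      show "{y\<in>X. agr {..<n} y x} \<subseteq> {x}"
      proof
        fix y assume y: "y \<in> {y\<in>X. agr {..<n} y x}"
        have "y \<in> cube n" "x \<in> cube n" using X x y by auto
        then have "y = x" using y unfolding cube_def agr_def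
          by (auto simp: PiE_def extensional_def fun_eq_iff)
        then show "y \<in> {x}" by simp
      qed
    qed
    then show ?thesis unfolding cnt_def by simp
  qed
  have N: "real (card X) > 0" using fX X by auto
  have "ent X {..<n} = (\<Sum>x\<in>X. ln (2 ^ n / real (card X))) / real (card X)"
    unfolding ent_def by (simp add: c1)
  also have "\<dots> = ln (2 ^ n / real (card X))" using N by simp
  finally show ?thesis .
qed

definition negp :: "nat set \<Rightarrow> (nat \<Rightarrow> bool) \<Rightarrow> (nat \<Rightarrow> bool)" where
  "negp K g = restrict (\<lambda>j. \<not> g j) K"

lemma negp_negp: "g \<in> K \<rightarrow>\<^sub>E (UNIV::bool set) \<Longrightarrow> negp K (negp K g) = g"
  unfolding negp_def by (auto simp: fun_eq_iff PiE_def extensional_def)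

lemma negp_Pi: "negp K g \<in> K \<rightarrow>\<^sub>E (UNIV::bool set)"
  unfolding negp_def by auto

lemma event_iff:
  assumes X: "X \<subseteq> cube n" and K: "K \<subseteq> {..<n}"
  shows "mu n (clause_and (K, g) X) > (1 - z) * mu n X \<longleftrightarrow> real (pcount X K (negp K g)) < z * real (card X)"
proof -
  have fX: "finite X" using finite_subset[OF X finite_cube] .
  let ?E = "{x\<in>X. restrict x K = negp K g}"
  have ca: "clause_and (K, g) X = X - ?E"
    unfolding clause_and_def clause_val_def negp_def by (auto simp: fun_eq_iff restrict_def)
  have sub: "clause_and (K, g) X \<subseteq> cube n" using X unfolding clause_and_def by auto
  have "card (X - ?E) = card X - card ?E" using fX by (intro card_Diff_subset) auto
  moreover have "card ?E \<le> card X" using fX by (intro card_mono) auto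
  ultimately have cc: "real (card (clause_and (K, g) X)) = real (card X) - real (pcount X K (negp K g))"
    unfolding ca pcount_def by (simp add: of_nat_diff)
  show ?thesis unfolding mu_sub[OF sub] mu_sub[OF X] cc
    by (simp add: field_simps)
qed

lemma clause_count:
  assumes X: "X \<subseteq> cube n"
  shows "clause_prob n k (\<lambda>C. mu n (clause_and C X) > (1 - z) * mu n X)
       = (\<Sum>K\<in>subs {..<n} k. real (card (bad X K z))) / (real (n choose k) * 2 ^ k)"
proof -
  let ?P = "\<lambda>C. mu n (clause_and C X) > (1 - z) * mu n X"
  have fS: "finite (subs {..<n} k)" by (rule finite_subs) simp
  have fPi: "\<And>K. K \<in> subs {..<n} k \<Longrightarrow> finite (K \<rightarrow>\<^sub>E (UNIV::bool set))"
    unfolding subs_def by (intro finite_PiE) (auto intro: fin_sub)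
  have cl: "clauses n k = Sigma (subs {..<n} k) (\<lambda>K. K \<rightarrow>\<^sub>E (UNIV::bool set))"
    unfolding clauses_def subs_def by auto
  have ev: "{C \<in> clauses n k. ?P C} = Sigma (subs {..<n} k) (\<lambda>K. {g \<in> K \<rightarrow>\<^sub>E (UNIV::bool set). ?P (K, g)})"
    unfolding clauses_def subs_def by auto
  have c1: "card (clauses n k) = (\<Sum>K\<in>subs {..<n} k. card (K \<rightarrow>\<^sub>E (UNIV::bool set)))"
    unfolding cl by (rule card_SigmaI[OF fS]) (use fPi in auto)
  also have "\<dots> = (\<Sum>K\<in>subs {..<n} k. 2 ^ k)"
  proof (rule sum.cong[OF refl])
    fix K assume "K \<in> subs {..<n} k"
    then have "K \<subseteq> {..<n}" "card K = k" by (auto simp: subs_def)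
    then have fK: "finite K" and cK: "card K = k" using finite_subset by auto
    show "card (K \<rightarrow>\<^sub>E (UNIV::bool set)) = 2 ^ k" using card_patterns[OF fK] cK by simp
  qed
  also have "\<dots> = (n choose k) * 2 ^ k" using card_subs[of "{..<n}" k] by simp
  finally have c1: "card (clauses n k) = (n choose k) * 2 ^ k" .
  have c2: "card {C \<in> clauses n k. ?P C} = (\<Sum>K\<in>subs {..<n} k. card {g \<in> K \<rightarrow>\<^sub>E (UNIV::bool set). ?P (K, g)})"
    unfolding ev by (rule card_SigmaI[OF fS]) (use fPi in auto)
  also have "\<dots> = (\<Sum>K\<in>subs {..<n} k. card (bad X K z))"
  proof (rule sum.cong[OF refl])
    fix K assume K: "K \<in> subs {..<n} k"
    have KU: "K \<subseteq> {..<n}" using K by (simp add: subs_def)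
    have "bij_betw (negp K) {g \<in> K \<rightarrow>\<^sub>E (UNIV::bool set). ?P (K, g)} (bad X K z)"
    proof (rule bij_betw_byWitness[where f'="negp K"])
      show "\<forall>a\<in>{g \<in> K \<rightarrow>\<^sub>E (UNIV::bool set). ?P (K, g)}. negp K (negp K a) = a"
        using negp_negp by blast
      show "\<forall>a\<in>bad X K z. negp K (negp K a) = a"
        using negp_negp unfolding bad_def by blast
      show "negp K ` {g \<in> K \<rightarrow>\<^sub>E (UNIV::bool set). ?P (K, g)} \<subseteq> bad X K z"
      proof
        fix p assume "p \<in> negp K ` {g \<in> K \<rightarrow>\<^sub>E (UNIV::bool set). ?P (K, g)}"
        then obtain g where g: "?P (K, g)" and p: "p = negp K g" by blast
        have "real (pcount X K p) < z * real (card X)" using g event_iff[OF X KU, where g=g and z=z] p by simp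
        then show "p \<in> bad X K z" unfolding bad_def using negp_Pi p by blast
      qed
      show "negp K ` bad X K z \<subseteq> {g \<in> K \<rightarrow>\<^sub>E (UNIV::bool set). ?P (K, g)}"
      proof
        fix g assume "g \<in> negp K ` bad X K z"
        then obtain p where p: "p \<in> bad X K z" and g: "g = negp K p" by auto
        have "negp K g = p" using p g negp_negp unfolding bad_def by auto
        have "real (pcount X K (negp K g)) < z * real (card X)" using p \<open>negp K g = p\<close> unfolding bad_def by simp
        then have "?P (K, g)" using event_iff[OF X KU, where g=g and z=z] by simp
        moreover have "g \<in> K \<rightarrow>\<^sub>E (UNIV::bool set)" using g negp_Pi by simp
        ultimately show "g \<in> {g \<in> K \<rightarrow>\<^sub>E (UNIV::bool set). ?P (K, g)}" by blast
      qed
    qed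
    then show "card {g \<in> K \<rightarrow>\<^sub>E (UNIV::bool set). ?P (K, g)} = card (bad X K z)"
      by (rule bij_betw_same_card)
  qed
  finally show ?thesis unfolding clause_prob_def c1 by simp
qed

lemma core:
  assumes X: "X \<subseteq> cube n" and muX: "mu n X \<ge> exp (- H)" and k: "1 \<le> k" "k \<le> n"
    and eta: "0 < \<eta>" "\<eta> \<le> 1" and z: "2 ^ k * z \<le> \<eta>"
  shows "(1 - \<eta>) * clause_prob n k (\<lambda>C. mu n (clause_and C X) > (1 - z) * mu n X)
       \<le> H / real (n div k) - \<eta> * ln \<eta>"
proof -
  let ?U = "{..<n}"
  have fX: "finite X" using finite_subset[OF X finite_cube] .
  have Xne: "X \<noteq> {}"
  proof
    assume "X = {}"
    then have "mu n X = 0" unfolding mu_def by simp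
    moreover have "exp (- H) > 0" by simp
    ultimately show False using muX by linarith
  qed
  have N: "real (card X) > 0" using fX Xne by auto
  have sup: "\<And>A B. A \<subseteq> ?U \<Longrightarrow> B \<subseteq> ?U \<Longrightarrow> A \<inter> B = {} \<Longrightarrow> ent X A + ent X B \<le> ent X (A \<union> B)"
    by (rule ent_superadd[OF fX Xne]) (auto intro: fin_sub)
  have nn: "\<And>A. A \<subseteq> ?U \<Longrightarrow> ent X A \<ge> 0"
    by (rule ent_nonneg[OF fX Xne]) (auto intro: fin_sub)
  have m: "real (n div k) > 0" using k by (simp add: div_greater_zero_iff)
  have Tb: "real (n div k) * Tav ?U (ent X) k \<le> ent X ?U"
    using Tav_bound[OF finite_lessThan[of n] sup nn, where k=k] by (simp only: card_lessThan)
  have "ent X ?U = ln (2 ^ n / real (card X))" by (rule ent_full[OF X Xne])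
  also have "\<dots> = - ln (mu n X)" unfolding mu_sub[OF X] using N by (simp add: ln_div)
  also have "\<dots> \<le> H"
  proof -
    have e: "exp (- H) > 0" by simp
    have mp: "mu n X > 0" using muX e by linarith
    have "ln (exp (- H)) \<le> ln (mu n X)" using muX e mp by (subst ln_le_cancel_iff) auto
    then show ?thesis by simp
  qed
  finally have "real (n div k) * Tav ?U (ent X) k \<le> H" using Tb by linarith
  then have T: "Tav ?U (ent X) k \<le> H / real (n div k)" using m by (simp add: pos_le_divide_eq mult.commute)
  have C: "real (n choose k) > 0" using k by simp
  have "(1 - \<eta>) * clause_prob n k (\<lambda>C. mu n (clause_and C X) > (1 - z) * mu n X)
      = (\<Sum>K\<in>subs ?U k. real (card (bad X K z)) / 2 ^ k * (1 - \<eta>)) / real (n choose k)"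
  proof -
    define S where "S = (\<Sum>K\<in>subs ?U k. real (card (bad X K z)))"
    have a1: "(\<Sum>K\<in>subs ?U k. real (card (bad X K z)) / 2 ^ k * (1 - \<eta>)) = S / 2 ^ k * (1 - \<eta>)"
      unfolding S_def by (simp only: sum_distrib_right[symmetric] sum_divide_distrib[symmetric])
    have a2: "(1 - \<eta>) * (S / (real (n choose k) * 2 ^ k)) = S / 2 ^ k * (1 - \<eta>) / real (n choose k)"
      using C by (simp add: field_simps)
    show ?thesis unfolding clause_count[OF X] S_def[symmetric] a1 a2 ..
  qed
  also have "\<dots> \<le> (\<Sum>K\<in>subs ?U k. ent X K - \<eta> * ln \<eta>) / real (n choose k)"
  proof (rule divide_right_mono[OF sum_mono])
    fix K assume K: "K \<in> subs ?U k"
    then have fK: "finite K" and cK: "card K = k" unfolding subs_def by (auto intro: fin_sub)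
    show "real (card (bad X K z)) / 2 ^ k * (1 - \<eta>) \<le> ent X K - \<eta> * ln \<eta>"
      using bad_bound[OF fX Xne fK eta] z cK by simp
  qed (use C in simp)
  also have "\<dots> = Tav ?U (ent X) k - \<eta> * ln \<eta>"
  proof -
    have cs: "real (card (subs ?U k)) = real (n choose k)" using card_subs[of ?U k] by simp
    have "(\<Sum>K\<in>subs ?U k. ent X K - \<eta> * ln \<eta>) = (\<Sum>K\<in>subs ?U k. ent X K) - real (n choose k) * (\<eta> * ln \<eta>)"
      by (simp only: sum_subtractf sum_constant cs)
    then show ?thesis unfolding Tav_def card_lessThan using C by (simp add: diff_divide_distrib)
  qed
  finally show ?thesis using T by linarith
qed



lemma lnn_over_n: "((\<lambda>n::nat. ln (real n) / real n) \<longlongrightarrow> 0) at_top"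
  by real_asymp

lemma ev_ln_ge1: "eventually (\<lambda>n::nat. ln (real n) \<ge> 1) at_top"
proof -
  have "filterlim (\<lambda>n::nat. ln (real n)) at_top at_top"
    by (rule filterlim_compose[OF ln_at_top filterlim_real_sequentially])
  then show ?thesis by (simp add: filterlim_at_top)
qed

lemma ln100: "ln (100::real) \<le> 18"
proof -
  have "ln (10::real) \<le> 10 - 1" by (rule ln_le_minus_one) simp
  moreover have "ln (100::real) = ln 10 + ln 10" using ln_mult[of "10::real" 10] by simp
  ultimately show ?thesis by simp
qed

lemma arith_final:
  fixes N L K M c e hh :: real
  assumes L: "L \<ge> 1" and KM: "N \<le> 2 * K * M" and Kc: "K \<le> c * L" and M: "M > 0"
    and c: "c > 0" and e: "e = 1 / (20 * c)" and h: "\<bar>hh\<bar> \<le> e * (N / L^2)" and K: "K \<ge> 0"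
  shows "hh / M \<le> 1 / 10"
proof -
  have "N / L^2 \<le> 2 * K * M / L^2" using KM L by (simp add: divide_right_mono)
  also have "\<dots> \<le> 2 * (c * L) * M / L^2" using Kc M L K by (intro divide_right_mono mult_right_mono) auto
  also have "\<dots> = 2 * c * M / L" using L by (simp add: power2_eq_square field_simps)
  also have "\<dots> \<le> 2 * c * M / 1" using divide_left_mono[of 1 L "2*c*M"] L c M by simp
  also have "\<dots> = 2 * c * M" by simp
  finally have "e * (N / L^2) \<le> e * (2 * c * M)" using e c by (intro mult_left_mono) auto
  also have "\<dots> = M / 10" using e c by simp
  finally have "\<bar>hh\<bar> \<le> M / 10" using h by linarith
  then have "hh \<le> M / 10" by linarith
  then show ?thesis using M by (simp add: divide_le_eq)
qed

lemma div_lower: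
  fixes n k :: nat assumes k: "k \<ge> 1" "2 * k \<le> n"
  shows "real n \<le> 2 * real k * real (n div k)"
proof -
  have e: "n div k * k + n mod k = n" by (rule div_mult_mod_eq)
  have m: "n mod k < k" using k by simp
  have d: "n div k \<ge> 1" using k by (simp add: div_greater_zero_iff Suc_le_eq)
  have "1 * k \<le> n div k * k" using d by (rule mult_le_mono1)
  then have "n \<le> 2 * (n div k * k)" using e m by linarith
  then have "real n \<le> real (2 * (n div k * k))" by (simp only: of_nat_le_iff)
  then show ?thesis by (simp add: algebra_simps)
qed



theorem claimB:
  fixes k :: "nat \<Rightarrow> nat" and h :: "nat \<Rightarrow> real" and \<zeta> :: "nat \<Rightarrow> real"
  assumes "\<And>n. 1 \<le> k n"
    and "(\<lambda>n. real (k n)) \<in> O(\<lambda>n. ln (real n))"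
    and "h \<in> o(\<lambda>n. real n / (ln (real n))^2)"
    and "\<zeta> \<in> o(\<lambda>n. 1 / 2 ^ k n)"
  shows "\<exists>n0. \<forall>n\<ge>n0. \<forall>X \<subseteq> cube n. mu n X \<ge> exp (- h n) \<longrightarrow>
           clause_prob n (k n) (\<lambda>C. mu n (clause_and C X) > (1 - \<zeta> n) * mu n X) < 1/2"
proof -
  note k1 = assms(1)
  obtain c where c: "c > 0" and evK: "eventually (\<lambda>n. norm (real (k n)) \<le> c * norm (ln (real n))) at_top"
    using assms(2) by (elim landau_o.bigE)
  define e where "e = 1 / (20 * c)"
  have e: "e > 0" using c by (simp add: e_def)
  have evH: "eventually (\<lambda>n. norm (h n) \<le> e * norm (real n / (ln (real n))^2)) at_top"
    using landau_o.smallD[OF assms(3) e] .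
  have evZ: "eventually (\<lambda>n. norm (\<zeta> n) \<le> (1/100) * norm (1 / 2 ^ k n :: real)) at_top"
    using landau_o.smallD[OF assms(4), of "1/100"] by simp
  have evR: "eventually (\<lambda>n::nat. ln (real n) / real n < 1 / (2 * c)) at_top"
    using order_tendstoD(2)[OF lnn_over_n, of "1 / (2 * c)"] c by simp
  have "eventually (\<lambda>n. norm (real (k n)) \<le> c * norm (ln (real n)) \<and>
      norm (h n) \<le> e * norm (real n / (ln (real n))^2) \<and>
      norm (\<zeta> n) \<le> (1/100) * norm (1 / 2 ^ k n :: real) \<and>
      ln (real n) / real n < 1 / (2 * c) \<and> ln (real n) \<ge> 1 \<and> n \<ge> 1) at_top"
    using evK evH evZ evR ev_ln_ge1 eventually_ge_at_top[of "1::nat"] by eventually_elim auto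
  then obtain n0 where n0: "\<And>n. n \<ge> n0 \<Longrightarrow> norm (real (k n)) \<le> c * norm (ln (real n)) \<and>
      norm (h n) \<le> e * norm (real n / (ln (real n))^2) \<and>
      norm (\<zeta> n) \<le> (1/100) * norm (1 / 2 ^ k n :: real) \<and>
      ln (real n) / real n < 1 / (2 * c) \<and> ln (real n) \<ge> 1 \<and> n \<ge> 1"
    unfolding eventually_at_top_linorder by blast
  show ?thesis
  proof (intro exI allI impI)
    fix n X assume nn0: "n \<ge> n0" and X: "X \<subseteq> cube n" and muX: "mu n X \<ge> exp (- h n)"
    note H = n0[OF nn0]
    have L: "ln (real n) \<ge> 1" and n1: "n \<ge> 1" using H by auto
    have Lpos: "ln (real n) > 0" using L by simp
    have npos: "real n > 0" using n1 by simp
    have Kc: "real (k n) \<le> c * ln (real n)" using H Lpos by simp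
    have "ln (real n) < real n / (2 * c)" using H npos c by (simp add: divide_less_eq field_simps)
    then have "c * ln (real n) < real n / 2" using c by (simp add: field_simps)
    then have "2 * real (k n) \<le> real n" using Kc by linarith
    then have k2: "2 * k n \<le> n" by linarith
    have kn: "k n \<le> n" using k2 by simp
    have M: "real (n div k n) > 0" using k1[of n] kn by (simp add: div_greater_zero_iff)
    have KM: "real n \<le> 2 * real (k n) * real (n div k n)" by (rule div_lower[OF k1 k2])
    have hb: "\<bar>h n\<bar> \<le> e * (real n / (ln (real n))^2)"
      using H npos Lpos by simp
    have hM: "h n / real (n div k n) \<le> 1 / 10"
      by (rule arith_final[OF L KM Kc M c e_def hb]) simp
    have zb: "2 ^ k n * \<zeta> n \<le> 1 / 100"
    proof -
      have "\<bar>\<zeta> n\<bar> \<le> (1/100) * (1 / 2 ^ k n)" using H by simp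
      then have "\<zeta> n \<le> (1/100) * (1 / 2 ^ k n)" by linarith
      then show ?thesis by (simp add: field_simps)
    qed
    have core': "(1 - 1/100) * clause_prob n (k n) (\<lambda>C. mu n (clause_and C X) > (1 - \<zeta> n) * mu n X)
       \<le> h n / real (n div k n) - 1/100 * ln (1/100)"
      by (rule core[OF X muX k1 kn _ _ zb]) simp_all
    have l: "- (1/100) * ln (1/100::real) = ln 100 / 100" by (simp add: ln_div)
    show "clause_prob n (k n) (\<lambda>C. mu n (clause_and C X) > (1 - \<zeta> n) * mu n X) < 1/2"
    proof -
      define P where "P = clause_prob n (k n) (\<lambda>C. mu n (clause_and C X) > (1 - \<zeta> n) * mu n X)"
      define q where "q = h n / real (n div k n)"
      define l1 where "l1 = ln (1/100::real)"
      define l2 where "l2 = ln (100::real)"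
      have a: "(1 - 1/100) * P \<le> q - 1/100 * l1" using core' unfolding P_def q_def l1_def .
      have b: "- (1/100) * l1 = l2 / 100" using l unfolding l1_def l2_def .
      have c: "(1 - 1/100) * P = (99/100) * P" by simp
      have d: "q \<le> 1/10" using hM unfolding q_def .
      have f: "l2 \<le> 18" using ln100 unfolding l2_def .
      have "P < 1/2" using a b c d f by linarith
      then show ?thesis unfolding P_def .
    qed
  qed
qed


end
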